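(* Let $\mathcal{C}=\mathrm{CSS}(C_X,C_Z)$ be a quantum Tanner code over $\mathbb{F}_q$ built from a group $G$, generating sets $A,B$ with $|A|=|B|=\Delta$, and inner codes $C_A\subseteq\mathbb{F}_q^A$, $C_B\subseteq\mathbb{F}_q^B$, such that (1) the all-ones vector lies in $C_A$ and the all-ones vector lies in $C_B^\perp$, and (2) $n=|G||A||B|$ is relatively prime to $q$. Then the all-ones vector $\mathbf{1}\in\mathbb{F}_q^Q$ lies in $C_Z\setminus C_X^\perp$ and in $C_X\setminus C_Z^\perp$.
   Context: Quantum Tanner code: $G$ is a finite group and $A,B\subseteq G$ with $A=A^{-1}$, $B=B^{-1}$, $|A|=|B|=\Delta$. The face set is $Q=G\times A\times B$, where the face $(g,a,b)$ has vertices $(g,00),(ag,01),(gb,10),(agb,11)$ in $V=G\times\{0,1\}^2$; $n=|Q|$. For each vertex $v$, let $Q(v)$ be the set of faces containing $v$, identified with $A\times B$ by: for $v=(h,00)$, $(a,b)\mapsto(h,a,b)$; for $v=(h,01)$, $(a,b)\mapsto(a^{-1}h,a,b)$; for $v=(h,10)$, $(a,b)\mapsto(hb^{-1},a,b)$; for $v=(h,11)$, $(a,b)\mapsto(a^{-1}hb^{-1},a,b)$. For $x\in\mathbb{F}_q^Q$, its local view $x|_{Q(v)}\in\mathbb{F}_q^{A\times B}$ is the restriction under this identification. For linear codes $C_1\subseteq\mathbb{F}_q^{A}$, $C_2\subseteq\mathbb{F}_q^{B}$, the tensor code $C_1\otimes C_2\subseteq\mathbb{F}_q^{A\times B}$ consists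 of matrices with all columns in $C_1$ and all rows in $C_2$; $(C_1\otimes C_2)^\perp=C_1^\perp\otimes\mathbb{F}_q^B+\mathbb{F}_q^A\otimes C_2^\perp$. Then $C_X=\{x\in\mathbb{F}_q^Q: x|_{Q(v)}\in(C_A\otimes C_B)^\perp\ \forall v\in G\times\{00,11\}\}$ and $C_Z=\{x\in\mathbb{F}_q^Q: x|_{Q(v)}\in(C_A^\perp\otimes C_B^\perp)^\perp\ \forall v\in G\times\{01,10\}\}$; one has $C_X^\perp\subseteq C_Z$. Duals are with respect to the standard bilinear form. *)

theory Defs
  imports "HOL-Algebra.Group"
begin

definition vecs :: "'i set \<Rightarrow> ('i \<Rightarrow> 'f::field) set" where
  "vecs S = {x. \<forall>i. i \<notin> S \<longrightarrow> x i = 0}"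

definition lin_code :: "'i set \<Rightarrow> ('i \<Rightarrow> 'f::field) set \<Rightarrow> bool" where
  "lin_code S C \<longleftrightarrow> C \<subseteq> vecs S \<and> (\<lambda>i. 0) \<in> C \<and>
     (\<forall>x\<in>C. \<forall>y\<in>C. (\<lambda>i. x i + y i) \<in> C) \<and> (\<forall>c. \<forall>x\<in>C. (\<lambda>i. c * x i) \<in> C)"

definition dual :: "'i set \<Rightarrow> ('i \<Rightarrow> 'f::field) set \<Rightarrow> ('i \<Rightarrow> 'f) set" where
  "dual S C = {y \<in> vecs S. \<forall>x\<in>C. (\<Sum>i\<in>S. x i * y i) = 0}"

definition ones :: "'i set \<Rightarrow> 'i \<Rightarrow> 'f::field" where
  "ones S = (\<lambda>i. if i \<in> S then 1 else 0)"

definition tensor :: "'a set \<Rightarrow> 'b set \<Rightarrow> ('a \<Rightarrow> 'f::field) set \<Rightarrow> ('b \<Rightarrow> 'f) set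
     \<Rightarrow> ('a \<times> 'b \<Rightarrow> 'f) set" where
  "tensor A B C1 C2 = {M \<in> vecs (A \<times> B).
     (\<forall>b\<in>B. (\<lambda>a. M (a, b)) \<in> C1) \<and> (\<forall>a\<in>A. (\<lambda>b. M (a, b)) \<in> C2)}"

definition faces :: "('g, 'm) monoid_scheme \<Rightarrow> 'g set \<Rightarrow> 'g set \<Rightarrow> ('g \<times> 'g \<times> 'g) set" where
  "faces G A B = carrier G \<times> A \<times> B"

text \<open>Local views at the four vertex types (h,00), (h,01), (h,10), (h,11).\<close>
definition lv00 :: "('g, 'm) monoid_scheme \<Rightarrow> 'g set \<Rightarrow> 'g set \<Rightarrow> 'g \<Rightarrow> ('g \<times> 'g \<times> 'g \<Rightarrow> 'f::field) \<Rightarrow> ('g \<times> 'g \<Rightarrow> 'f)" where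
  "lv00 G A B h x = (\<lambda>(a, b). if a \<in> A \<and> b \<in> B then x (h, a, b) else 0)"

definition lv01 :: "('g, 'm) monoid_scheme \<Rightarrow> 'g set \<Rightarrow> 'g set \<Rightarrow> 'g \<Rightarrow> ('g \<times> 'g \<times> 'g \<Rightarrow> 'f::field) \<Rightarrow> ('g \<times> 'g \<Rightarrow> 'f)" where
  "lv01 G A B h x = (\<lambda>(a, b). if a \<in> A \<and> b \<in> B then x (inv\<^bsub>G\<^esub> a \<otimes>\<^bsub>G\<^esub> h, a, b) else 0)"

definition lv10 :: "('g, 'm) monoid_scheme \<Rightarrow> 'g set \<Rightarrow> 'g set \<Rightarrow> 'g \<Rightarrow> ('g \<times> 'g \<times> 'g \<Rightarrow> 'f::field) \<Rightarrow> ('g \<times> 'g \<Rightarrow> 'f)" where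
  "lv10 G A B h x = (\<lambda>(a, b). if a \<in> A \<and> b \<in> B then x (h \<otimes>\<^bsub>G\<^esub> inv\<^bsub>G\<^esub> b, a, b) else 0)"

definition lv11 :: "('g, 'm) monoid_scheme \<Rightarrow> 'g set \<Rightarrow> 'g set \<Rightarrow> 'g \<Rightarrow> ('g \<times> 'g \<times> 'g \<Rightarrow> 'f::field) \<Rightarrow> ('g \<times> 'g \<Rightarrow> 'f)" where
  "lv11 G A B h x = (\<lambda>(a, b). if a \<in> A \<and> b \<in> B then x (inv\<^bsub>G\<^esub> a \<otimes>\<^bsub>G\<^esub> h \<otimes>\<^bsub>G\<^esub> inv\<^bsub>G\<^esub> b, a, b) else 0)"

definition CX :: "('g, 'm) monoid_scheme \<Rightarrow> 'g set \<Rightarrow> 'g set \<Rightarrow> ('g \<Rightarrow> 'f::field) set \<Rightarrow> ('g \<Rightarrow> 'f) set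
     \<Rightarrow> ('g \<times> 'g \<times> 'g \<Rightarrow> 'f) set" where
  "CX G A B CA CB = {x \<in> vecs (faces G A B). \<forall>h\<in>carrier G.
      lv00 G A B h x \<in> dual (A \<times> B) (tensor A B CA CB) \<and>
      lv11 G A B h x \<in> dual (A \<times> B) (tensor A B CA CB)}"

definition CZ :: "('g, 'm) monoid_scheme \<Rightarrow> 'g set \<Rightarrow> 'g set \<Rightarrow> ('g \<Rightarrow> 'f::field) set \<Rightarrow> ('g \<Rightarrow> 'f) set
     \<Rightarrow> ('g \<times> 'g \<times> 'g \<Rightarrow> 'f) set" where
  "CZ G A B CA CB = {x \<in> vecs (faces G A B). \<forall>h\<in>carrier G.
      lv01 G A B h x \<in> dual (A \<times> B) (tensor A B (dual A CA) (dual B CB)) \<and>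
      lv10 G A B h x \<in> dual (A \<times> B) (tensor A B (dual A CA) (dual B CB))}"

end

theory Submission
  imports Defs
begin

lemma card_univ_zero: "of_nat (card (UNIV :: 'f::{field,finite} set)) = (0::'f)"
proof -
  have "(\<Sum>x\<in>(UNIV::'f set). x) = (\<Sum>x\<in>UNIV. x + 1)"
    by (rule sum.reindex_bij_witness[where i="\<lambda>x. x + 1" and j="\<lambda>x. x - 1"]) auto
  also have "\<dots> = (\<Sum>x\<in>UNIV. x) + of_nat (card (UNIV :: 'f set))"
    by (simp add: sum.distrib)
  finally show ?thesis by simp
qed

lemma nonzero_coprime:
  assumes "coprime n (card (UNIV :: 'f::{field,finite} set))"
  shows "of_nat n \<noteq> (0::'f)"
proof
  assume h: "of_nat n = (0::'f)"
  have "CHAR('f) dvd n" using h by (simp add: of_nat_eq_0_iff_char_dvd)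
  moreover have "CHAR('f) dvd card (UNIV :: 'f set)"
    using card_univ_zero[where 'f='f] by (simp add: of_nat_eq_0_iff_char_dvd)
  ultimately have "CHAR('f) dvd 1" using assms by (metis coprime_common_divisor)
  hence "of_nat 1 = (0::'f)" by (simp only: of_nat_eq_0_iff_char_dvd)
  thus False by simp
qed

lemma sum_ones_dual:
  assumes "\<forall>a\<in>A. (\<Sum>b\<in>B. M (a, b) * ones B b) = (0::'f::field)"
  shows "(\<Sum>i\<in>A \<times> B. M i * ones (A \<times> B) i) = 0"
proof -
  have "(\<Sum>i\<in>A \<times> B. M i * ones (A \<times> B) i) = (\<Sum>(a,b)\<in>A \<times> B. M (a,b) * ones B b)"
    by (rule sum.cong) (auto simp: ones_def)
  also have "\<dots> = (\<Sum>a\<in>A. \<Sum>b\<in>B. M (a,b) * ones B b)"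
    by (simp add: sum.cartesian_product)
  finally show ?thesis using assms by simp
qed

lemma sum_ones_dual2:
  assumes "\<forall>b\<in>B. (\<Sum>a\<in>A. M (a, b) * ones A a) = (0::'f::field)"
  shows "(\<Sum>i\<in>A \<times> B. M i * ones (A \<times> B) i) = 0"
proof -
  have "(\<Sum>i\<in>A \<times> B. M i * ones (A \<times> B) i) = (\<Sum>(a,b)\<in>A \<times> B. M (a,b) * ones A a)"
    by (rule sum.cong) (auto simp: ones_def)
  also have "\<dots> = (\<Sum>b\<in>B. \<Sum>a\<in>A. M (a,b) * ones A a)"
    by (simp add: sum.cartesian_product[symmetric] sum.swap[of _ A B])
  finally show ?thesis using assms by simp
qed

theorem proposition5p1:
  fixes G :: "('g, 'm) monoid_scheme"
    and A B :: "'g set"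
    and CA CB :: "('g \<Rightarrow> 'f::{field, finite}) set"
  assumes "group G" and "finite (carrier G)"
    and "A \<subseteq> carrier G" and "B \<subseteq> carrier G"
    and "\<forall>a\<in>A. inv\<^bsub>G\<^esub> a \<in> A" and "\<forall>b\<in>B. inv\<^bsub>G\<^esub> b \<in> B"
    and "card A = card B"
    and "lin_code A CA" and "lin_code B CB"
    and "ones A \<in> CA" and "ones B \<in> dual B CB"
    and "coprime (card (carrier G) * card A * card B) (card (UNIV :: 'f set))"
  shows "ones (faces G A B) \<in> CZ G A B CA CB - dual (faces G A B) (CX G A B CA CB)
       \<and> ones (faces G A B) \<in> CX G A B CA CB - dual (faces G A B) (CZ G A B CA CB)"
proof -
  interpret group G by fact
  let ?Q = "faces G A B"
  let ?one = "ones ?Q :: _ \<Rightarrow> 'f"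
  have v: "?one \<in> vecs ?Q" by (simp add: vecs_def ones_def)
  have l00: "lv00 G A B h ?one = ones (A \<times> B)" if "h \<in> carrier G" for h
    using that assms(3,4) by (auto simp: lv00_def ones_def faces_def fun_eq_iff)
  have l11: "lv11 G A B h ?one = ones (A \<times> B)" if "h \<in> carrier G" for h
    using that assms(3,4) by (auto simp: lv11_def ones_def faces_def fun_eq_iff intro!: m_closed inv_closed)
  have l01: "lv01 G A B h ?one = ones (A \<times> B)" if "h \<in> carrier G" for h
    using that assms(3,4) by (auto simp: lv01_def ones_def faces_def fun_eq_iff)
  have l10: "lv10 G A B h ?one = ones (A \<times> B)" if "h \<in> carrier G" for h
    using that assms(3,4) by (auto simp: lv10_def ones_def faces_def fun_eq_iff)
  have ovec: "ones (A \<times> B) \<in> vecs (A \<times> B)" by (simp add: vecs_def ones_def)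
  have dX: "ones (A \<times> B) \<in> dual (A \<times> B) (tensor A B CA CB)"
    unfolding dual_def
  proof (intro CollectI conjI ovec ballI)
    fix M assume "M \<in> tensor A B CA CB"
    hence "\<forall>a\<in>A. (\<lambda>b. M (a, b)) \<in> CB" by (simp add: tensor_def)
    hence "\<forall>a\<in>A. (\<Sum>b\<in>B. M (a, b) * ones B b) = 0" using assms(11) by (simp add: dual_def)
    thus "(\<Sum>i\<in>A \<times> B. M i * ones (A \<times> B) i) = 0" by (rule sum_ones_dual)
  qed
  have dZ: "ones (A \<times> B) \<in> dual (A \<times> B) (tensor A B (dual A CA) (dual B CB))"
    unfolding dual_def[of "A \<times> B"]
  proof (intro CollectI conjI ovec ballI)
    fix M assume "M \<in> tensor A B (dual A CA) (dual B CB)"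
    hence "\<forall>b\<in>B. (\<lambda>a. M (a, b)) \<in> dual A CA" by (simp add: tensor_def)
    hence "\<forall>b\<in>B. (\<Sum>a\<in>A. ones A a * M (a, b)) = 0" using assms(10) by (simp add: dual_def)
    hence "\<forall>b\<in>B. (\<Sum>a\<in>A. M (a, b) * ones A a) = 0" by (simp add: mult.commute)
    thus "(\<Sum>i\<in>A \<times> B. M i * ones (A \<times> B) i) = 0" by (rule sum_ones_dual2)
  qed
  have inX: "?one \<in> CX G A B CA CB" using v dX l00 l11 by (simp add: CX_def)
  have inZ: "?one \<in> CZ G A B CA CB" using v dZ l01 l10 by (simp add: CZ_def)
  have self: "(\<Sum>i\<in>?Q. ?one i * ?one i) \<noteq> 0"
  proof -
    have "(\<Sum>i\<in>?Q. ?one i * ?one i) = (\<Sum>i\<in>?Q. 1)"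
      by (rule sum.cong) (auto simp: ones_def)
    also have "\<dots> = of_nat (card (carrier G) * card A * card B)"
      by (simp add: faces_def card_cartesian_product)
    finally show ?thesis using nonzero_coprime[OF assms(12)] by simp
  qed
  have nX: "?one \<notin> dual ?Q (CX G A B CA CB)" using self inX by (auto simp: dual_def)
  have nZ: "?one \<notin> dual ?Q (CZ G A B CA CB)" using self inZ by (auto simp: dual_def)
  show ?thesis using inX inZ nX nZ by blast
qed

end
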